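(* Let $p$ be a prime, let $d_1,\dots,d_l$ be integers with $1\le d_\lambda\le p$, and put $d=\sum_\lambda d_\lambda$. Then for every integer $s$ with $1\le s\le p-1$, \[ s-\mathrm{sht}_V(s)=\mathrm{sht}_V(p-s)+s+d-l-D_V. \]
   Context: Here $D_V:=\sum_{\lambda=1}^{l}\frac{(d_\lambda-1)d_\lambda}{2}$ and, for a positive integer $j$ with $p\nmid j$, $\mathrm{sht}_V(j):=\sum_{\lambda=1}^{l}\sum_{i=1}^{d_\lambda-1}\lfloor ij/p\rfloor$. (In the paper these arise from the decomposition $V\cong\bigoplus_\lambda V_{d_\lambda}$ of a representation of $\mathbb{Z}/p$ in characteristic $p$ into indecomposables.) *)

theory Defs
  imports Complex_Main "HOL-Computational_Algebra.Primes"
begin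

text \<open>The decomposition is encoded by the number l of indecomposable summands and
the dimensions d 1, ..., d l (values of d outside 1..l are irrelevant).\<close>

definition D_V :: "(nat \<Rightarrow> int) \<Rightarrow> nat \<Rightarrow> int" where
  "D_V d l = (\<Sum>k=1..l. ((d k - 1) * d k) div 2)"

definition sht_V :: "int \<Rightarrow> (nat \<Rightarrow> int) \<Rightarrow> nat \<Rightarrow> int \<Rightarrow> int" where
  "sht_V p d l j = (\<Sum>k=1..l. \<Sum>i=1..d k - 1. \<lfloor>of_int (i * j) / (of_int p :: real)\<rfloor>)"

end

theory Submission
  imports Defs
begin

lemma fl: "(p::int) > 0 \<Longrightarrow> \<lfloor>of_int a / (of_int p::real)\<rfloor> = a div p"
  by (simp add: floor_divide_of_int_eq)

lemma key:
  assumes "prime (p::int)" "1 \<le> i" "i \<le> p - 1" "1 \<le> s" "s \<le> p - 1"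
  shows "(i*(p-s)) div p = i - (i*s) div p - 1"
proof -
  have nd: "\<not> p dvd i*s"
  proof
    assume "p dvd i*s"
    then have "p dvd i \<or> p dvd s" using assms(1) prime_dvd_mult_iff by blast
    moreover have "\<not> p dvd i" using zdvd_imp_le[of p i] assms(2,3) by linarith
    moreover have "\<not> p dvd s" using zdvd_imp_le[of p s] assms(4,5) by linarith
    ultimately show False by blast
  qed
  have "i*(p-s) = (- (i*s)) + i*p" by (simp add: algebra_simps)
  then have "(i*(p-s)) div p = i + (-(i*s)) div p"
    using div_mult_self1[of p "-(i*s)" i] prime_gt_0_int[OF assms(1)] by simp
  also have "(-(i*s)) div p = - ((i*s) div p) - 1"
    using nd zdiv_zminus1_eq_if[of p "i*s"] prime_gt_0_int[OF assms(1)]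
    by (simp add: dvd_eq_mod_eq_0)
  finally show ?thesis by simp
qed

lemma gauss: "n \<ge> 0 \<Longrightarrow> 2 * (\<Sum>i=1..(n::int). i) = n*(n+1)"
proof (induction n rule: int_ge_induct)
  case base then show ?case by simp
next
  case (step n)
  have "{1..n+1} = insert (n+1) {1..n}" using step by auto
  then show ?case using step by (simp add: algebra_simps sum.insert)
qed

lemma inner:
  assumes "prime (p::int)" "1 \<le> e" "e \<le> p" "1 \<le> s" "s \<le> p - 1"
  shows "(\<Sum>i=1..e-1. (i*(p-s)) div p) = ((e-1)*e) div 2 - (\<Sum>i=1..e-1. (i*s) div p) - (e-1)"
proof -
  have "(\<Sum>i=1..e-1. (i*(p-s)) div p) = (\<Sum>i=1..e-1. i - (i*s) div p - 1)"
  proof (rule sum.cong[OF refl])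
    fix i assume "i \<in> {1..e-1}"
    then show "(i*(p-s)) div p = i - (i*s) div p - 1" using key[OF assms(1) _ _ assms(4,5), of i] assms(3) by simp
  qed
  also have "\<dots> = (\<Sum>i=1..e-1. i) - (\<Sum>i=1..e-1. (i*s) div p) - (e-1)"
    using assms by (simp add: sum_subtractf)
  also have "(\<Sum>i=1..e-1. i) = ((e-1)*e) div 2"
    using gauss[of "e-1"] assms by simp
  finally show ?thesis .
qed

theorem lemma3p2:
  fixes p :: int and l :: nat and d :: "nat \<Rightarrow> int" and s :: int
  assumes "prime p"
    and "\<And>k. k \<in> {1..l} \<Longrightarrow> 1 \<le> d k \<and> d k \<le> p"
    and "1 \<le> s" and "s \<le> p - 1"
  shows "s - sht_V p d l s
           = sht_V p d l (p - s) + s + (\<Sum>k=1..l. d k) - int l - D_V d l"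
proof -
  have pp: "p > 0" using assms(1) prime_gt_0_int by blast
  have sv: "sht_V p d l j = (\<Sum>k=1..l. \<Sum>i=1..d k - 1. (i*j) div p)" for j
    unfolding sht_V_def by (intro sum.cong refl) (metis fl pp of_int_mult)
  have "sht_V p d l (p-s) = (\<Sum>k=1..l. ((d k-1)*d k) div 2 - (\<Sum>i=1..d k-1. (i*s) div p) - (d k-1))"
    unfolding sv
  proof (rule sum.cong[OF refl])
    fix k assume "k \<in> {1..l}"
    then show "(\<Sum>i=1..d k-1. (i*(p-s)) div p) = ((d k-1)*d k) div 2 - (\<Sum>i=1..d k-1. (i*s) div p) - (d k-1)"
      using inner[OF assms(1) _ _ assms(3,4), of "d k"] assms(2)[of k] by simp
  qed
  also have "\<dots> = D_V d l - sht_V p d l s - ((\<Sum>k=1..l. d k) - int l)"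
    unfolding sv D_V_def by (simp add: sum_subtractf)
  finally show ?thesis by simp
qed

end
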